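(* Let $R$ be a unital ring and let $S$ be an inverse submonoid with zero of the multiplicative monoid of $R$. Suppose that (1) whenever $a,b\in S$ are orthogonal, $a+b\in S$; and (2) whenever $e\in S$ is an idempotent, $1-e\in S$. Then $S$ is a Boolean inverse monoid.
   Context: In an inverse semigroup with zero, $s,t$ are orthogonal if $s^{-1}t=0=st^{-1}$, and compatible if $s^{-1}t,st^{-1}$ are idempotents; the natural partial order is used. A Boolean inverse monoid is an inverse monoid with zero in which every pair of compatible elements has a join, multiplication distributes over these joins, and the idempotents form a Boolean algebra (a distributive lattice with bottom in which each principal order ideal is a unital Boolean algebra). *)

theory Defs
  imports Main
begin

definition inverse_monoid_zero :: "'a set \<Rightarrow> ('a \<Rightarrow> 'a \<Rightarrow> 'a) \<Rightarrow> 'a \<Rightarrow> 'a \<Rightarrow> bool" where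
  "inverse_monoid_zero C m u z \<longleftrightarrow>
     u \<in> C \<and> z \<in> C \<and>
     (\<forall>x\<in>C. \<forall>y\<in>C. m x y \<in> C) \<and>
     (\<forall>x\<in>C. \<forall>y\<in>C. \<forall>w\<in>C. m (m x y) w = m x (m y w)) \<and>
     (\<forall>x\<in>C. m u x = x \<and> m x u = x) \<and>
     (\<forall>x\<in>C. m z x = z \<and> m x z = z) \<and>
     (\<forall>x\<in>C. \<exists>!y. y \<in> C \<and> m (m x y) x = x \<and> m (m y x) y = y)"

definition sinv :: "'a set \<Rightarrow> ('a \<Rightarrow> 'a \<Rightarrow> 'a) \<Rightarrow> 'a \<Rightarrow> 'a" where
  "sinv C m x = (THE y. y \<in> C \<and> m (m x y) x = x \<and> m (m y x) y = y)"

definition idems :: "'a set \<Rightarrow> ('a \<Rightarrow> 'a \<Rightarrow> 'a) \<Rightarrow> 'a set" where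
  "idems C m = {e \<in> C. m e e = e}"

definition orthogonal :: "'a set \<Rightarrow> ('a \<Rightarrow> 'a \<Rightarrow> 'a) \<Rightarrow> 'a \<Rightarrow> 'a \<Rightarrow> 'a \<Rightarrow> bool" where
  "orthogonal C m z s t \<longleftrightarrow> m (sinv C m s) t = z \<and> m s (sinv C m t) = z"

definition compatible :: "'a set \<Rightarrow> ('a \<Rightarrow> 'a \<Rightarrow> 'a) \<Rightarrow> 'a \<Rightarrow> 'a \<Rightarrow> bool" where
  "compatible C m s t \<longleftrightarrow> m (sinv C m s) t \<in> idems C m \<and> m s (sinv C m t) \<in> idems C m"

definition natle :: "'a set \<Rightarrow> ('a \<Rightarrow> 'a \<Rightarrow> 'a) \<Rightarrow> 'a \<Rightarrow> 'a \<Rightarrow> bool" where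
  "natle C m s t \<longleftrightarrow> (\<exists>e\<in>idems C m. s = m t e)"

definition is_lub_in :: "'a set \<Rightarrow> ('a \<Rightarrow> 'a \<Rightarrow> 'a) \<Rightarrow> 'a set \<Rightarrow> 'a \<Rightarrow> 'a \<Rightarrow> 'a \<Rightarrow> bool" where
  "is_lub_in C m A x y j \<longleftrightarrow> j \<in> A \<and> natle C m x j \<and> natle C m y j \<and>
     (\<forall>w\<in>A. natle C m x w \<and> natle C m y w \<longrightarrow> natle C m j w)"

definition is_glb_in :: "'a set \<Rightarrow> ('a \<Rightarrow> 'a \<Rightarrow> 'a) \<Rightarrow> 'a set \<Rightarrow> 'a \<Rightarrow> 'a \<Rightarrow> 'a \<Rightarrow> bool" where
  "is_glb_in C m A x y j \<longleftrightarrow> j \<in> A \<and> natle C m j x \<and> natle C m j y \<and>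
     (\<forall>w\<in>A. natle C m w x \<and> natle C m w y \<longrightarrow> natle C m w j)"

text \<open>The idempotents form a Boolean algebra: a distributive lattice with bottom z
  in which every principal order ideal is a unital Boolean algebra.\<close>
definition idems_boolean :: "'a set \<Rightarrow> ('a \<Rightarrow> 'a \<Rightarrow> 'a) \<Rightarrow> 'a \<Rightarrow> bool" where
  "idems_boolean C m z \<longleftrightarrow>
     (let E = idems C m in
       (\<forall>e\<in>E. \<forall>f\<in>E. (\<exists>j. is_lub_in C m E e f j) \<and> (\<exists>k. is_glb_in C m E e f k)) \<and>
       (\<forall>e\<in>E. \<forall>f\<in>E. \<forall>g\<in>E. \<forall>j d k l.
           is_lub_in C m E f g j \<and> is_glb_in C m E e j d \<and>
           is_glb_in C m E e f k \<and> is_glb_in C m E e g l \<longrightarrow> is_lub_in C m E k l d) \<and>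
       z \<in> E \<and> (\<forall>e\<in>E. natle C m z e) \<and>
       (\<forall>e\<in>E. \<forall>f\<in>E. natle C m f e \<longrightarrow>
           (\<exists>g\<in>E. natle C m g e \<and> is_glb_in C m E f g z \<and> is_lub_in C m E f g e)))"

definition boolean_inverse_monoid :: "'a set \<Rightarrow> ('a \<Rightarrow> 'a \<Rightarrow> 'a) \<Rightarrow> 'a \<Rightarrow> 'a \<Rightarrow> bool" where
  "boolean_inverse_monoid C m u z \<longleftrightarrow>
     inverse_monoid_zero C m u z \<and>
     (\<forall>s\<in>C. \<forall>t\<in>C. compatible C m s t \<longrightarrow> (\<exists>j. is_lub_in C m C s t j)) \<and>
     (\<forall>a\<in>C. \<forall>s\<in>C. \<forall>t\<in>C. \<forall>j. compatible C m s t \<and> is_lub_in C m C s t j \<longrightarrow>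
         is_lub_in C m C (m a s) (m a t) (m a j) \<and> is_lub_in C m C (m s a) (m t a) (m j a)) \<and>
     idems_boolean C m z"

end

theory Submission
  imports Defs
begin

context
  fixes S :: "'a::ring_1 set"
  assumes IM: "inverse_monoid_zero S (*) 1 0"
begin

abbreviation iv where "iv x \<equiv> sinv S (*) x"

lemma one_S: "1 \<in> S" and zero_S: "0 \<in> S"
  using IM unfolding inverse_monoid_zero_def by auto

lemma mult_S: "x \<in> S \<Longrightarrow> y \<in> S \<Longrightarrow> x*y \<in> S"
  using IM unfolding inverse_monoid_zero_def by auto

lemma inv_props: assumes "x \<in> S"
  shows "iv x \<in> S" "x * (iv x * x) = x" "iv x * (x * iv x) = iv x"
proof -
  have "\<exists>!y. y \<in> S \<and> x * y * x = x \<and> y * x * y = y"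
    using IM assms unfolding inverse_monoid_zero_def by auto
  then have "iv x \<in> S \<and> x * iv x * x = x \<and> iv x * x * iv x = iv x"
    unfolding sinv_def by (rule theI')
  then show "iv x \<in> S" "x * (iv x * x) = x" "iv x * (x * iv x) = iv x"
    by (auto simp: mult.assoc)
qed

lemma inv_uniq: assumes "x \<in> S" "y \<in> S" "x * (y * x) = x" "y * (x * y) = y"
  shows "iv x = y"
proof -
  have "\<exists>!y. y \<in> S \<and> x * y * x = x \<and> y * x * y = y"
    using IM assms unfolding inverse_monoid_zero_def by auto
  then show ?thesis unfolding sinv_def
    by (rule the1_equality) (use assms in \<open>auto simp: mult.assoc\<close>)
qed

lemma inv3: "x \<in> S \<Longrightarrow> x * (iv x * (x * z)) = x * z"
  by (metis inv_props(2) mult.assoc)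
lemma inv4: "x \<in> S \<Longrightarrow> iv x * (x * (iv x * z)) = iv x * z"
  by (metis inv_props(3) mult.assoc)

lemma idem_self_inv: "e \<in> S \<Longrightarrow> e * e = e \<Longrightarrow> iv e = e"
  by (rule inv_uniq) (auto simp: mult.assoc[symmetric])

lemma prod_idem: assumes e: "e\<in>S" "e*e=e" and f: "f\<in>S" "f*f=f"
  shows "(e*f)*(e*f) = e*f"
proof -
  have ee: "\<And>z. e*(e*z) = e*z" by (metis mult.assoc e(2))
  have ff: "\<And>z. f*(f*z) = f*z" by (metis mult.assoc f(2))
  define a where "a = e*f"
  define x where "x = iv a"
  have aS: "a \<in> S" using a_def e f mult_S by auto
  have xS: "x \<in> S" using x_def aS inv_props by auto
  have y1: "a * ((f*(x*e)) * a) = a"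
    by (simp add: a_def mult.assoc ee ff f(2)) (metis a_def aS inv_props(2) mult.assoc x_def)
  have y2: "(f*(x*e)) * (a * (f*(x*e))) = f*(x*e)"
  proof -
    have "(f*(x*e)) * (a * (f*(x*e))) = f*((x*(a*x))*e)"
      by (simp add: a_def mult.assoc ee ff e(2))
    also have "x*(a*x) = x" using inv_props(3)[OF aS] x_def by simp
    finally show ?thesis by (simp add: mult.assoc)
  qed
  have yS: "f*(x*e) \<in> S" using mult_S e f xS by auto
  have xy: "x = f*(x*e)" using inv_uniq[OF aS yS y1 y2] x_def by simp
  have xx: "x * x = x"
  proof -
    have "x * x = f*((x*(e*f)*x)*e)" using xy by (metis mult.assoc)
    also have "x*(e*f)*x = x" using inv_props(3)[OF aS] x_def a_def by (simp add: mult.assoc)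
    finally show ?thesis using xy by (simp add: mult.assoc)
  qed
  have "iv x = x" using idem_self_inv xS xx by auto
  moreover have "iv x = a"
    by (rule inv_uniq[OF xS aS]) (use inv_props[OF aS] x_def in auto)
  ultimately show ?thesis using xx x_def a_def by simp
qed

lemma idem_comm: assumes e: "e\<in>S" "e*e=e" and f: "f\<in>S" "f*f=f"
  shows "e*f = f*e"
proof -
  have a: "(e*f)*(e*f) = e*f" using prod_idem e f by blast
  have b: "(f*e)*(f*e) = f*e" using prod_idem e f by blast
  have efS: "e*f \<in> S" and feS: "f*e \<in> S" using mult_S e f by auto
  have "iv (e*f) = e*f" using idem_self_inv efS a by blast
  moreover have "iv (e*f) = f*e"
  proof (rule inv_uniq[OF efS feS])
    show "e * f * (f * e * (e * f)) = e * f" using a e f by (simp add: mult.assoc)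
       (metis mult.assoc)
    show "f * e * (e * f * (f * e)) = f * e" using b e f by (simp add: mult.assoc)
       (metis mult.assoc)
  qed
  ultimately show ?thesis by simp
qed

lemma inv_inv: "x \<in> S \<Longrightarrow> iv (iv x) = x"
  by (rule inv_uniq) (auto simp: inv_props)

lemma dS: "x \<in> S \<Longrightarrow> iv x * x \<in> S" and rS: "x \<in> S \<Longrightarrow> x * iv x \<in> S"
  by (auto intro: mult_S inv_props)

lemma d_idem: "x \<in> S \<Longrightarrow> (iv x * x) * (iv x * x) = iv x * x"
  by (metis inv_props(3) mult.assoc)
lemma r_idem: "x \<in> S \<Longrightarrow> (x * iv x) * (x * iv x) = x * iv x"
  by (metis inv_props(2) mult.assoc)

lemma inv_mult: assumes x: "x \<in> S" and y: "y \<in> S"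
  shows "iv (x*y) = iv y * iv x"
proof (rule inv_uniq)
  show "x*y \<in> S" using x y mult_S by auto
  show "iv y * iv x \<in> S" using x y mult_S inv_props by auto
  have c: "(y * iv y) * (iv x * x) = (iv x * x) * (y * iv y)"
    using idem_comm[OF rS[OF y] r_idem[OF y] dS[OF x] d_idem[OF x]] .
  have "x * y * (iv y * iv x * (x * y)) = x * ((y * iv y) * (iv x * x)) * y"
    by (simp add: mult.assoc)
  also have "\<dots> = x * ((iv x * x) * (y * iv y)) * y" using c by simp
  also have "\<dots> = x * y" using x y by (simp add: mult.assoc inv3 inv_props(2))
  finally show "x * y * (iv y * iv x * (x * y)) = x * y" .
  have "iv y * iv x * (x * y * (iv y * iv x)) = iv y * ((iv x * x) * (y * iv y)) * iv x"
    by (simp add: mult.assoc)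
  also have "\<dots> = iv y * ((y * iv y) * (iv x * x)) * iv x" using c by simp
  also have "\<dots> = iv y * iv x" using x y
    by (simp add: mult.assoc inv4 inv_props(3))
  finally show "iv y * iv x * (x * y * (iv y * iv x)) = iv y * iv x" .
qed

lemma conj_idem: assumes x: "x \<in> S" and e: "e \<in> S" "e*e=e"
  shows "x*e*iv x \<in> S" "(x*e*iv x)*(x*e*iv x) = x*e*iv x"
proof -
  show "x*e*iv x \<in> S" using x e mult_S inv_props by auto
  have c: "e * (iv x * x) = (iv x * x) * e" using idem_comm[OF e dS[OF x] d_idem[OF x]] .
  have "(x*e*iv x)*(x*e*iv x) = x * (e * (iv x * x)) * e * iv x" by (simp add: mult.assoc)
  also have "\<dots> = x * (iv x * x) * (e * e) * iv x" using c by (simp add: mult.assoc)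
  also have "\<dots> = x*e*iv x" using x e by (simp add: mult.assoc inv3)
  finally show "(x*e*iv x)*(x*e*iv x) = x*e*iv x" .
qed

lemma memE: "e \<in> idems S (*) \<longleftrightarrow> e \<in> S \<and> e*e = e"
  by (simp add: idems_def)

lemma Ecomm: "e \<in> idems S (*) \<Longrightarrow> f \<in> idems S (*) \<Longrightarrow> e*f = f*e"
  using idem_comm memE by blast

lemma Eprod: "e \<in> idems S (*) \<Longrightarrow> f \<in> idems S (*) \<Longrightarrow> e*f \<in> idems S (*)"
  using prod_idem mult_S memE by metis

lemma dE: "x \<in> S \<Longrightarrow> iv x * x \<in> idems S (*)"
  using dS d_idem memE by blast
lemma rE: "x \<in> S \<Longrightarrow> x * iv x \<in> idems S (*)"
  using rS r_idem memE by blast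
lemma conjE: "x \<in> S \<Longrightarrow> e \<in> idems S (*) \<Longrightarrow> x*e*iv x \<in> idems S (*)"
  using conj_idem memE by blast
lemma conjE': "x \<in> S \<Longrightarrow> e \<in> idems S (*) \<Longrightarrow> iv x*e*x \<in> idems S (*)"
  using conjE[of "iv x" e] inv_inv inv_props(1) by auto

lemma natle_idem: assumes "a \<in> idems S (*)" "b \<in> idems S (*)"
  shows "natle S (*) a b \<longleftrightarrow> a = b*a"
proof
  assume "natle S (*) a b"
  then obtain g where g: "g \<in> idems S (*)" "a = b*g" unfolding natle_def by blast
  then show "a = b*a" using assms memE by (metis mult.assoc)
next
  assume "a = b*a" then show "natle S (*) a b" using assms unfolding natle_def by blast
qed

lemma natle_char: assumes x: "x \<in> S" and w: "w \<in> S"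
  shows "natle S (*) x w \<longleftrightarrow> x = w*(iv x*x)"
proof
  assume "natle S (*) x w"
  then obtain e where e: "e \<in> idems S (*)" "x = w*e" unfolding natle_def by blast
  have eS: "e \<in> S" "e*e = e" using e memE by auto
  have ix: "iv x = e * iv w" using e(2) inv_mult[OF w eS(1)] idem_self_inv eS by simp
  have c: "e * (iv w * w) = (iv w * w) * e" using Ecomm dE w e(1) by blast
  have "iv x * x = e * (iv w * w) * e" using ix e(2) by (simp add: mult.assoc)
  also have "\<dots> = (iv w * w) * e" using c eS by (simp add: mult.assoc)
  finally have "w * (iv x * x) = w * (iv w * w) * e" by (simp add: mult.assoc)
  also have "\<dots> = x" using e(2) w by (simp add: mult.assoc inv3)
  finally show "x = w*(iv x*x)" by simp
next
  assume "x = w*(iv x*x)" then show "natle S (*) x w" unfolding natle_def using dE x by blast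
qed

lemma natle_antisym: assumes x: "x \<in> S" and y: "y \<in> S"
  and xy: "natle S (*) x y" and yx: "natle S (*) y x" shows "x = y"
proof -
  have dom: "iv a * a = (iv b * b) * (iv a * a)" if a: "a \<in> S" and b: "b \<in> S"
      and ab: "natle S (*) a b" for a b
  proof -
    have a1: "b*(iv a*a) = a" using natle_char a b ab by simp
    have da: "(iv a*a)*(iv a*a) = iv a*a" using d_idem a by blast
    have "iv (b*(iv a*a)) = iv (iv a*a) * iv b" using inv_mult[OF b dS[OF a]] .
    then have ia: "iv a = (iv a*a) * iv b" using idem_self_inv[OF dS[OF a] da] a1 by simp
    have "iv a * a = ((iv a*a) * iv b) * (b*(iv a*a))" using ia a1 by simp
    also have "\<dots> = (iv a * a) * (iv b * b) * (iv a * a)" by (simp add: mult.assoc)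
    also have "(iv a * a) * (iv b * b) = (iv b * b) * (iv a * a)"
      using Ecomm dE a b by blast
    also have "(iv b * b) * (iv a * a) * (iv a * a) = (iv b * b) * (iv a * a)"
      using da by (simp add: mult.assoc)
    finally show ?thesis .
  qed
  have 1: "iv x * x = iv y * y * (iv x * x)" using dom[OF x y xy] .
  have 2: "iv y * y = iv x * x * (iv y * y)" using dom[OF y x yx] .
  have 3: "iv x * x * (iv y * y) = iv y * y * (iv x * x)" using Ecomm dE x y by blast
  have dd: "iv x * x = iv y * y" using 1 2 3 by simp
  have "x = y*(iv x*x)" using natle_char x y xy by blast
  also have "\<dots> = y*(iv y*y)" using dd by (rule arg_cong)
  also have "\<dots> = y" using inv_props(2) y by blast
  finally show ?thesis .
qed

lemma natle_antisymE: assumes "a \<in> idems S (*)" "b \<in> idems S (*)"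
  "natle S (*) a b" "natle S (*) b a" shows "a = b"
  using natle_antisym assms memE by blast


context
  assumes A2: "\<forall>a\<in>S. \<forall>b\<in>S. orthogonal S (*) 0 a b \<longrightarrow> a + b \<in> S"
    and A3: "\<forall>e\<in>S. e * e = e \<longrightarrow> 1 - e \<in> S"
begin

lemma compE: "e \<in> idems S (*) \<Longrightarrow> 1 - e \<in> idems S (*)"
  using A3 memE by (auto simp: algebra_simps)

lemma Ejoin: assumes e: "e \<in> idems S (*)" and f: "f \<in> idems S (*)"
  shows "e + f - e*f \<in> idems S (*)"
proof -
  have eS: "e \<in> S" "e*e = e" and fS: "f \<in> S" "f*f = f" using e f memE by auto
  have fe: "f*e = e*f" using Ecomm e f by simp
  have ce: "1 - e \<in> idems S (*)" using compE e by blast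
  have uS: "f*(1-e) \<in> S" using mult_S fS ce memE by blast
  have ive: "iv e = e" using idem_self_inv eS by blast
  have ivu: "iv (f*(1-e)) = (1-e)*f"
    using inv_mult[OF fS(1), of "1-e"] ce memE idem_self_inv fS by auto
  have o1: "e*(f*(1-e)) = 0"
  proof -
    have "e*(f*(1-e)) = e*f - e*(f*e)" by (simp add: algebra_simps)
    also have "e*(f*e) = e*f" using fe eS by (metis mult.assoc)
    finally show ?thesis by simp
  qed
  have o2: "e*((1-e)*f) = 0"
  proof -
    have "e*(e*f) = e*f" using eS by (metis mult.assoc)
    then show ?thesis by (simp add: algebra_simps)
  qed
  have "orthogonal S (*) 0 e (f*(1-e))"
    unfolding orthogonal_def using ive ivu o1 o2 by simp
  then have "e + f*(1-e) \<in> S" using A2 eS uS by blast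
  moreover have "e + f*(1-e) = e + f - e*f" using fe by (simp add: algebra_simps)
  ultimately have jS: "e + f - e*f \<in> S" by simp
  have "(e + f - e*f) * (e + f - e*f) = e + f - e*f"
  proof -
    have r1: "e*(e*f) = e*f" using eS by (metis mult.assoc)
    have r2: "f*(e*f) = e*f" using fe fS by (metis mult.assoc)
    have r3: "e*(f*(e*f)) = e*f" using r1 r2 by simp
    have r4: "e*(f*e) = e*f" using fe r1 by simp
    show ?thesis using eS fS fe r1 r2 r3 r4 by (simp add: algebra_simps)
  qed
  then show ?thesis using jS memE by blast
qed

lemma Ejoin_lub: assumes e: "e \<in> idems S (*)" and f: "f \<in> idems S (*)"
  shows "is_lub_in S (*) (idems S (*)) e f (e + f - e*f)"
proof -
  have eS: "e \<in> S" "e*e = e" and fS: "f \<in> S" "f*f = f" using e f memE by auto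
  have fe: "f*e = e*f" using Ecomm e f by simp
  have j: "e + f - e*f \<in> idems S (*)" using Ejoin e f by blast
  have r1: "e*(e*f) = e*f" using eS by (metis mult.assoc)
  have r2: "f*(e*f) = e*f" using fe fS by (metis mult.assoc)
  have "e = (e + f - e*f) * e" using eS fe r1 by (simp add: algebra_simps)
  then have le1: "natle S (*) e (e + f - e*f)" using natle_idem e j by blast
  have "f = (e + f - e*f) * f" using fS fe by (simp add: algebra_simps mult.assoc)
  then have le2: "natle S (*) f (e + f - e*f)" using natle_idem f j by blast
  have "natle S (*) (e + f - e*f) w"
    if w: "w \<in> idems S (*)" "natle S (*) e w" "natle S (*) f w" for w
  proof -
    have a: "w*e = e" "w*f = f" using natle_idem[OF e w(1)] natle_idem[OF f w(1)] w(2,3) by metis+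
    have b: "w*(e*f) = e*f" using a(1) by (metis mult.assoc)
    have "e + f - e*f = w*(e + f - e*f)" using a b by (simp add: algebra_simps)
    then show ?thesis using natle_idem w(1) j by blast
  qed
  then show ?thesis unfolding is_lub_in_def using le1 le2 j by blast
qed

lemma Emeet_glb: assumes e: "e \<in> idems S (*)" and f: "f \<in> idems S (*)"
  shows "is_glb_in S (*) (idems S (*)) e f (e*f)"
proof -
  have eS: "e \<in> S" "e*e = e" and fS: "f \<in> S" "f*f = f" using e f memE by auto
  have fe: "f*e = e*f" using Ecomm e f by simp
  have k: "e*f \<in> idems S (*)" using Eprod e f by blast
  have "e*f = e*(e*f)" using eS by (metis mult.assoc)
  then have l1: "natle S (*) (e*f) e" using natle_idem e k by blast
  have "e*f = f*(e*f)" using fe fS by (metis mult.assoc)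
  then have l2: "natle S (*) (e*f) f" using natle_idem f k by blast
  have "natle S (*) w (e*f)"
    if w: "w \<in> idems S (*)" "natle S (*) w e" "natle S (*) w f" for w
  proof -
    have a: "w = e*w" "w = f*w" using natle_idem[OF w(1) e] natle_idem[OF w(1) f] w(2,3) by metis+
    then have "w = (e*f)*w" by (metis mult.assoc)
    then show ?thesis using natle_idem w(1) k by blast
  qed
  then show ?thesis unfolding is_glb_in_def using l1 l2 k by blast
qed

lemma lub_uniqE: "is_lub_in S (*) (idems S (*)) e f j \<Longrightarrow> is_lub_in S (*) (idems S (*)) e f j'
   \<Longrightarrow> j = j'"
  unfolding is_lub_in_def using natle_antisymE by blast
lemma glb_uniqE: "is_glb_in S (*) (idems S (*)) e f j \<Longrightarrow> is_glb_in S (*) (idems S (*)) e f j'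
   \<Longrightarrow> j = j'"
  unfolding is_glb_in_def using natle_antisymE by blast

lemma idems_bool: "idems_boolean S (*) 0"
proof -
  let ?E = "idems S (*)"
  have 1: "\<forall>e\<in>?E. \<forall>f\<in>?E. (\<exists>j. is_lub_in S (*) ?E e f j) \<and> (\<exists>k. is_glb_in S (*) ?E e f k)"
    using Ejoin_lub Emeet_glb by blast
  have 2: "is_lub_in S (*) ?E k l d"
    if e: "e\<in>?E" and f: "f\<in>?E" and g: "g\<in>?E" and h: "is_lub_in S (*) ?E f g j"
       "is_glb_in S (*) ?E e j d" "is_glb_in S (*) ?E e f k" "is_glb_in S (*) ?E e g l"
    for e f g j d k l
  proof -
    have jj: "j = f + g - f*g" using lub_uniqE h(1) Ejoin_lub f g by blast
    have jE: "j \<in> ?E" using jj Ejoin f g by simp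
    have dd: "d = e*j" using glb_uniqE h(2) Emeet_glb e jE by blast
    have kk: "k = e*f" using glb_uniqE h(3) Emeet_glb e f by blast
    have ll: "l = e*g" using glb_uniqE h(4) Emeet_glb e g by blast
    have eS: "e*e = e" using e memE by auto
    have fe: "f*e = e*f" using Ecomm e f by simp
    have "e*f*(e*g) = e*(f*g)" using eS fe by (metis mult.assoc)
    then have "d = k + l - k*l" using dd jj kk ll by (simp add: algebra_simps)
    then show ?thesis using Ejoin_lub kk ll Eprod e f g by simp
  qed
  have 3: "0 \<in> ?E" using zero_S memE by simp
  have 4: "\<forall>e\<in>?E. natle S (*) 0 e" using natle_idem 3 by simp
  have 5: "\<exists>g\<in>?E. natle S (*) g e \<and> is_glb_in S (*) ?E f g 0 \<and> is_lub_in S (*) ?E f g e"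
    if e: "e\<in>?E" and f: "f\<in>?E" and fe: "natle S (*) f e" for e f
  proof -
    have f1: "e*f = f" using natle_idem e f fe by simp
    have ef: "f*e = e*f" using Ecomm e f by simp
    have gE: "e*(1-f) \<in> ?E" using Eprod compE e f by blast
    have eS: "e*e = e" using e memE by auto
    have fS: "f*f = f" using f memE by auto
    have g: "e*(1-f) = e - f" using f1 by (simp add: algebra_simps)
    have "e - f = e*(e - f)" using eS f1 by (simp add: algebra_simps)
    then have l: "natle S (*) (e - f) e" using natle_idem g gE e by simp
    have m: "f*(e-f) = 0" using ef f1 fS by (simp add: algebra_simps)
    have glb: "is_glb_in S (*) ?E f (e-f) 0" using Emeet_glb[OF f, of "e-f"] gE g m by simp
    have lub: "is_lub_in S (*) ?E f (e-f) e" using Ejoin_lub[OF f, of "e-f"] gE g m by simp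
    show ?thesis using l glb lub gE g by (intro bexI[of _ "e-f"]) auto
  qed
  show ?thesis unfolding idems_boolean_def Let_def using 1 2 3 4 5 by blast
qed

lemma comp_q: assumes s: "s \<in> S" and t: "t \<in> S" and c: "compatible S (*) s t"
  shows "s * iv t \<in> idems S (*)" "iv s * t \<in> idems S (*)" "t * iv s = s * iv t"
proof -
  show q: "s * iv t \<in> idems S (*)" "iv s * t \<in> idems S (*)" using c unfolding compatible_def by auto
  have "iv (s * iv t) = iv (iv t) * iv s" using inv_mult[OF s inv_props(1)[OF t]] .
  also have "iv (iv t) = t" using inv_inv[OF t] .
  finally have "iv (s * iv t) = t * iv s" .
  moreover have "iv (s * iv t) = s * iv t" using idem_self_inv q(1) memE by blast
  ultimately show "t * iv s = s * iv t" by simp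
qed

lemma comp_key: assumes s: "s \<in> S" and t: "t \<in> S" and c: "compatible S (*) s t"
  shows "s * (iv t * t) = t * (iv s * s)"
proof -
  have q: "s * iv t \<in> idems S (*)" and ts: "t * iv s = s * iv t" using comp_q[OF s t c] by auto
  have qq: "(s * iv t) * (s * iv t) = s * iv t" using q memE by blast
  have cm: "(iv s * s) * (iv t * t) = (iv t * t) * (iv s * s)" using Ecomm[OF dE[OF s] dE[OF t]] .
  have "s * (iv t * t) = (s * (iv s * s)) * (iv t * t)" using inv_props(2)[OF s] by simp
  also have "\<dots> = s * ((iv s * s) * (iv t * t))" by (simp add: mult.assoc)
  also have "\<dots> = s * ((iv t * t) * (iv s * s))" using cm by simp
  also have "\<dots> = (s * iv t) * (t * iv s) * s" by (simp add: mult.assoc)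
  also have "\<dots> = (s * iv t) * s" using ts qq by simp
  also have "\<dots> = t * (iv s * s)" using ts by (simp add: mult.assoc[symmetric])
  finally show ?thesis .
qed

lemma join_lub: assumes s: "s \<in> S" and t: "t \<in> S" and c: "compatible S (*) s t"
  shows "is_lub_in S (*) S s t (s + t - s * (iv t * t))"
proof -
  define ds where "ds = iv s * s"
  define dt where "dt = iv t * t"
  have dsE: "ds \<in> idems S (*)" and dtE: "dt \<in> idems S (*)" using dE s t ds_def dt_def by auto
  have dsS: "ds \<in> S" "ds * ds = ds" and dtS: "dt \<in> S" "dt * dt = dt" using dsE dtE memE by auto
  have key: "s * dt = t * ds" using comp_key[OF s t c] ds_def dt_def by simp
  have cds: "1 - ds \<in> idems S (*)" using compE dsE by blast
  have uS: "t * (1 - ds) \<in> S" using mult_S t cds memE by blast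
  have u: "t * (1 - ds) = t - s * dt" using key by (simp add: algebra_simps)
  have p: "iv s * t \<in> idems S (*)" using comp_q[OF s t c] by auto
  have pd: "(iv s * t) * ds = iv s * t"
  proof -
    have "ds * (iv s * t) = iv s * t" using inv4[OF s] ds_def by (simp add: mult.assoc)
    moreover have "ds * (iv s * t) = (iv s * t) * ds" using Ecomm[OF dsE p] .
    ultimately show ?thesis by simp
  qed
  have pd': "iv s * (t * ds) = iv s * t" using pd by (simp add: mult.assoc)
  have o1: "iv s * (t * (1 - ds)) = 0"
    using pd' by (simp add: algebra_simps)
  have ivu: "iv (t * (1 - ds)) = (1 - ds) * iv t"
    using inv_mult[OF t, of "1 - ds"] cds memE idem_self_inv by auto
  have sds: "s * ds = s" using inv_props(2)[OF s] ds_def by (simp add: mult.assoc)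
  have sds': "s * (ds * iv t) = s * iv t" using sds by (metis mult.assoc)
  have o2: "s * ((1 - ds) * iv t) = 0"
    using sds' by (simp add: algebra_simps)
  have "orthogonal S (*) 0 s (t * (1 - ds))"
    unfolding orthogonal_def using o1 o2 ivu by simp
  then have "s + t * (1 - ds) \<in> S" using A2 s uS by blast
  then have jS: "s + t - s * dt \<in> S" using u by (simp add: algebra_simps)
  have tdt: "t * dt = t" using inv_props(2)[OF t] dt_def by (simp add: mult.assoc)
  have "(s + t - s * dt) * ds = s * ds + t * ds - (s * dt) * ds" by (simp add: algebra_simps)
  also have "(s * dt) * ds = t * ds" using key dsS by (simp add: mult.assoc)
  finally have "(s + t - s * dt) * ds = s" using sds by simp
  then have le1: "natle S (*) s (s + t - s * dt)" unfolding natle_def using dsE by metis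
  have "(s + t - s * dt) * dt = s * dt + t * dt - s * (dt * dt)" by (simp add: algebra_simps)
  then have "(s + t - s * dt) * dt = t" using dtS tdt by simp
  then have le2: "natle S (*) t (s + t - s * dt)" unfolding natle_def using dtE by metis
  have "natle S (*) (s + t - s * dt) w"
    if w: "w \<in> S" "natle S (*) s w" "natle S (*) t w" for w
  proof -
    have a1: "w * ds = s" using natle_char[OF s w(1)] w(2) ds_def by simp
    have a2: "w * dt = t" using natle_char[OF t w(1)] w(3) dt_def by simp
    have a3: "w * (ds * dt) = s * dt" using a1 by (metis mult.assoc)
    have "s + t - s * dt = w * (ds + dt - ds * dt)" using a1 a2 a3 by (simp add: algebra_simps)
    moreover have "ds + dt - ds * dt \<in> idems S (*)" using Ejoin dsE dtE by blast
    ultimately show ?thesis unfolding natle_def by blast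
  qed
  then show ?thesis unfolding is_lub_in_def using le1 le2 jS dt_def by simp
qed

lemma lub_uniq: "is_lub_in S (*) S e f j \<Longrightarrow> is_lub_in S (*) S e f j' \<Longrightarrow> j = j'"
  unfolding is_lub_in_def using natle_antisym by blast

lemma gen1: assumes s: "s \<in> S" and t: "t \<in> S" and q: "s * iv t \<in> idems S (*)"
  and e: "e \<in> idems S (*)" shows "s * e * iv t \<in> idems S (*)"
proof -
  have cm: "(iv t * t) * e = e * (iv t * t)" using Ecomm[OF dE[OF t] e] .
  have "iv t * (t * e * iv t) = (iv t * t) * e * iv t" by (simp add: mult.assoc)
  also have "\<dots> = e * (iv t * (t * iv t))" using cm by (simp add: mult.assoc)
  also have "\<dots> = e * iv t" using inv_props(3)[OF t] by simp
  finally have "s * e * iv t = (s * iv t) * (t * e * iv t)" by (simp add: mult.assoc)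
  moreover have "t * e * iv t \<in> idems S (*)" using conjE[OF t e] .
  ultimately show ?thesis using Eprod q by simp
qed

lemma gen2: assumes s: "s \<in> S" and t: "t \<in> S" and q: "iv s * t \<in> idems S (*)"
  and e: "e \<in> idems S (*)" shows "iv s * e * t \<in> idems S (*)"
  using gen1[OF inv_props(1)[OF s] inv_props(1)[OF t] _ e] q inv_inv[OF t] by simp

lemma comp_left: assumes a: "a \<in> S" and s: "s \<in> S" and t: "t \<in> S" and c: "compatible S (*) s t"
  shows "compatible S (*) (a*s) (a*t)"
proof -
  have q: "s * iv t \<in> idems S (*)" "iv s * t \<in> idems S (*)" using comp_q[OF s t c] by auto
  have 1: "iv (a*s) * (a*t) = iv s * (iv a * a) * t" using inv_mult[OF a s] by (simp add: mult.assoc)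
  have 2: "(a*s) * iv (a*t) = a * (s * iv t) * iv a" using inv_mult[OF a t] by (simp add: mult.assoc)
  show ?thesis unfolding compatible_def 1 2 using gen2[OF s t q(2) dE[OF a]] conjE[OF a q(1)] by simp
qed

lemma comp_right: assumes a: "a \<in> S" and s: "s \<in> S" and t: "t \<in> S" and c: "compatible S (*) s t"
  shows "compatible S (*) (s*a) (t*a)"
proof -
  have q: "s * iv t \<in> idems S (*)" "iv s * t \<in> idems S (*)" using comp_q[OF s t c] by auto
  have 1: "iv (s*a) * (t*a) = iv a * (iv s * t) * a" using inv_mult[OF s a] by (simp add: mult.assoc)
  have 2: "(s*a) * iv (t*a) = s * (a * iv a) * iv t" using inv_mult[OF t a] by (simp add: mult.assoc)
  show ?thesis unfolding compatible_def 1 2 using gen1[OF s t q(1) rE[OF a]] conjE'[OF a q(2)] by simp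
qed

lemma distrib: assumes a: "a \<in> S" and s: "s \<in> S" and t: "t \<in> S" and c: "compatible S (*) s t"
  and j: "is_lub_in S (*) S s t j"
  shows "is_lub_in S (*) S (a*s) (a*t) (a*j)" "is_lub_in S (*) S (s*a) (t*a) (j*a)"
proof -
  have jj: "j = s + t - s * (iv t * t)" using lub_uniq[OF j join_lub[OF s t c]] .
  have q: "s * iv t \<in> idems S (*)" using comp_q[OF s t c] by auto
  have as: "a*s \<in> S" and at: "a*t \<in> S" and sa: "s*a \<in> S" and ta: "t*a \<in> S"
    using mult_S a s t by auto
  have cm1: "(s * iv t) * (iv a * a) = (iv a * a) * (s * iv t)" using Ecomm[OF q dE[OF a]] .
  have "a * s * (iv (a*t) * (a*t)) = a * ((s * iv t) * (iv a * a)) * t"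
    using inv_mult[OF a t] by (simp add: mult.assoc)
  also have "\<dots> = a * (iv a * a) * (s * iv t) * t" using cm1 by (simp add: mult.assoc)
  also have "\<dots> = a * s * (iv t * t)" using inv_props(2)[OF a] by (simp add: mult.assoc)
  finally have e1: "a * s * (iv (a*t) * (a*t)) = a * (s * (iv t * t))" by (simp add: mult.assoc)
  have "a * j = a*s + a*t - a * s * (iv (a*t) * (a*t))" unfolding jj using e1 by (simp add: algebra_simps)
  then show "is_lub_in S (*) S (a*s) (a*t) (a*j)" using join_lub[OF as at comp_left[OF a s t c]] by simp
  have cm2: "(a * iv a) * (iv t * t) = (iv t * t) * (a * iv a)" using Ecomm[OF rE[OF a] dE[OF t]] .
  have "s * a * (iv (t*a) * (t*a)) = s * ((a * iv a) * (iv t * t)) * a"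
    using inv_mult[OF t a] by (simp add: mult.assoc)
  also have "\<dots> = s * (iv t * t) * (a * iv a) * a" using cm2 by (simp add: mult.assoc)
  also have "\<dots> = s * (iv t * t) * a" using inv_props(2)[OF a] by (simp add: mult.assoc)
  finally have e2: "s * a * (iv (t*a) * (t*a)) = s * (iv t * t) * a" .
  have "j * a = s*a + t*a - s * a * (iv (t*a) * (t*a))" unfolding jj using e2 by (simp add: algebra_simps)
  then show "is_lub_in S (*) S (s*a) (t*a) (j*a)" using join_lub[OF sa ta comp_right[OF a s t c]] by simp
qed

lemma main: "boolean_inverse_monoid S (*) 1 0"
  unfolding boolean_inverse_monoid_def
proof (intro conjI)
  show "inverse_monoid_zero S (*) 1 0" using IM .
  show "\<forall>s\<in>S. \<forall>t\<in>S. compatible S (*) s t \<longrightarrow> (\<exists>j. is_lub_in S (*) S s t j)"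
    using join_lub by blast
  show "\<forall>a\<in>S. \<forall>s\<in>S. \<forall>t\<in>S. \<forall>j. compatible S (*) s t \<and> is_lub_in S (*) S s t j \<longrightarrow>
         is_lub_in S (*) S (a * s) (a * t) (a * j) \<and> is_lub_in S (*) S (s * a) (t * a) (j * a)"
    using distrib by blast
  show "idems_boolean S (*) 0" using idems_bool .
qed

end


end

theorem lemma3p1:
  fixes S :: "'a::ring_1 set"
  assumes "inverse_monoid_zero S (*) 1 0"
    and "\<forall>a\<in>S. \<forall>b\<in>S. orthogonal S (*) 0 a b \<longrightarrow> a + b \<in> S"
    and "\<forall>e\<in>S. e * e = e \<longrightarrow> 1 - e \<in> S"
  shows "boolean_inverse_monoid S (*) 1 0"
  using main assms by blast

end
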